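(* Let $n\ge 1$ and let $V^n$ be the $(n+1)\times(n+1)$ matrix $V^n_{ij}=B^n_j(i/n)$, $0\le i,j\le n$. Define $$H^n_{ij}=\binom{n+1}{i+j+1},\qquad \widetilde H^n_{ij}=\sum_{k=0}^{i+j+1}\binom{n-k+1}{n-i-j}\frac{s(n+1,k)}{n^{n-k+1}},$$ $$T^n_{ij}=\binom{n+1}{j-i},\qquad \widetilde T^n_{ij}=\sum_{k=0}^{j-i}\binom{n-k+1}{j-i-k}\frac{s(n+1,k)}{n^{n-k+1}},$$ $$D^n=\mathrm{diag}\big((-1)^{n-j}\,j!\,(n-j)!\big)_{j=0}^n,\qquad \Delta^n=\mathrm{diag}\Big(\binom{n}{j}\Big)_{j=0}^n,\qquad \widetilde V^n_{ij}=i^j(n-i)^{n-j}.$$ Then $$(V^n)^{-1}=(\Delta^n)^{-1}\big[\widetilde H^nT^n-H^n\widetilde T^n\big](\widetilde V^n)^T(D^n)^{-1}.$$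
   Context: $B^n_j(x)=\binom{n}{j}x^j(1-x)^{n-j}$. $s(n,k)$ denotes the signed Stirling numbers of the first kind, defined by $\prod_{i=0}^{n-1}(y-i)=\sum_{k=0}^{n}s(n,k)y^k$. Conventions: $\binom{a}{b}=0$ if $b<0$ or $b>a$; empty sums are $0$; $0^0=1$. *)

theory Defs
  imports "HOL-Computational_Algebra.Polynomial" "Jordan_Normal_Form.Matrix"
begin

text \<open>Signed Stirling numbers of the first kind:
  \<open>\<Prod>i<n. (y - i) = \<Sum>k. s n k * y^k\<close>.\<close>
definition stirling1s :: "nat \<Rightarrow> nat \<Rightarrow> real" where
  "stirling1s n k = coeff (\<Prod>i<n. [:- of_nat i, 1:]) k"

definition ibinom :: "int \<Rightarrow> int \<Rightarrow> real" where
  "ibinom a b = (if 0 \<le> b \<and> b \<le> a then real (nat a choose nat b) else 0)"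

definition bernstein :: "nat \<Rightarrow> nat \<Rightarrow> real \<Rightarrow> real" where
  "bernstein n j x = real (n choose j) * x ^ j * (1 - x) ^ (n - j)"

definition Vmat :: "nat \<Rightarrow> real mat" where
  "Vmat n = mat (n+1) (n+1) (\<lambda>(i,j). bernstein n j (real i / real n))"

definition Hmat :: "nat \<Rightarrow> real mat" where
  "Hmat n = mat (n+1) (n+1) (\<lambda>(i,j). ibinom (int n + 1) (int i + int j + 1))"

definition Htmat :: "nat \<Rightarrow> real mat" where
  "Htmat n = mat (n+1) (n+1) (\<lambda>(i,j).
     \<Sum>k\<in>{0..int i + int j + 1}. ibinom (int n - k + 1) (int n - int i - int j)
        * stirling1s (n+1) (nat k) / (real n powi (int n - k + 1)))"

definition Tmat :: "nat \<Rightarrow> real mat" where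
  "Tmat n = mat (n+1) (n+1) (\<lambda>(i,j). ibinom (int n + 1) (int j - int i))"

definition Ttmat :: "nat \<Rightarrow> real mat" where
  "Ttmat n = mat (n+1) (n+1) (\<lambda>(i,j).
     \<Sum>k\<in>{0..int j - int i}. ibinom (int n - k + 1) (int j - int i - k)
        * stirling1s (n+1) (nat k) / (real n powi (int n - k + 1)))"

definition Dmat :: "nat \<Rightarrow> real mat" where
  "Dmat n = mat_diag (n+1) (\<lambda>j. (-1) ^ (n - j) * fact j * fact (n - j))"

definition Dinv :: "nat \<Rightarrow> real mat" where
  "Dinv n = mat_diag (n+1) (\<lambda>j. 1 / ((-1) ^ (n - j) * fact j * fact (n - j)))"

definition Deltamat :: "nat \<Rightarrow> real mat" where
  "Deltamat n = mat_diag (n+1) (\<lambda>j. real (n choose j))"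

definition Deltainv :: "nat \<Rightarrow> real mat" where
  "Deltainv n = mat_diag (n+1) (\<lambda>j. 1 / real (n choose j))"

definition Vtmat :: "nat \<Rightarrow> real mat" where
  "Vtmat n = mat (n+1) (n+1) (\<lambda>(i,j). real i ^ j * real (n - i) ^ (n - j))"

end

theory Submission
  imports Defs "Jordan_Normal_Form.Determinant"
begin

definition Bu :: "nat \<Rightarrow> nat \<Rightarrow> nat \<Rightarrow> nat \<Rightarrow> nat \<Rightarrow> real" where
  "Bu n d e j k = (\<Sum>m\<le>n. (if j+m+1 = d \<and> m \<le> k \<and> k - m = e then 1 else 0))"

lemma Bu_eq: assumes "d \<le> Suc n"
  shows "Bu n d e j k = (if j < d \<and> k = e + (d - Suc j) then 1 else 0)"
proof -
  have "Bu n d e j k = (\<Sum>m\<le>n. (if m = d - Suc j then (if j < d \<and> k = e + (d - Suc j) then 1 else 0) else 0))"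
    unfolding Bu_def by (rule sum.cong) auto
  also have "\<dots> = (if j < d \<and> k = e + (d - Suc j) then 1 else 0)"
    using assms by (auto simp: sum.delta)
  finally show ?thesis .
qed

lemma Bu_sum: assumes "d \<le> Suc n"
  shows "(\<Sum>k\<le>n. Bu n d e j k * f k) = (if j < d \<and> e + (d - Suc j) \<le> n then f (e + (d - Suc j)) else 0)"
proof -
  have "(\<Sum>k\<le>n. Bu n d e j k * f k) = (\<Sum>k\<le>n. if k = e + (d - Suc j) then (if j < d then f (e + (d - Suc j)) else 0) else 0)"
    using assms by (intro sum.cong) (auto simp: Bu_eq)
  also have "\<dots> = (if j < d \<and> e + (d - Suc j) \<le> n then f (e + (d - Suc j)) else 0)" by (simp add: sum.delta)
  finally show ?thesis .
qed

lemma unit_sum: assumes "e \<le> d" "d \<le> Suc n"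
  shows "(\<Sum>j\<le>n. \<Sum>k\<le>n. (Bu n d e j k - Bu n e d j k) * w j k) = (\<Sum>j\<in>{e..<d}. w j (e + (d - Suc j)))"
proof -
  have "(\<Sum>j\<le>n. \<Sum>k\<le>n. (Bu n d e j k - Bu n e d j k) * w j k)
      = (\<Sum>j\<le>n. (\<Sum>k\<le>n. Bu n d e j k * w j k) - (\<Sum>k\<le>n. Bu n e d j k * w j k))"
    by (simp add: left_diff_distrib sum_subtractf)
  also have "\<dots> = (\<Sum>j\<le>n. if j \<in> {e..<d} then w j (e + (d - Suc j)) else 0)"
  proof (rule sum.cong[OF refl])
    fix j assume "j \<in> {..n}"
    have "d + (e - Suc j) = e + (d - Suc j)" if "j < e" using that assms by auto
    then show "(\<Sum>k\<le>n. Bu n d e j k * w j k) - (\<Sum>k\<le>n. Bu n e d j k * w j k) = (if j \<in> {e..<d} then w j (e + (d - Suc j)) else 0)"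
      using assms by (auto simp: Bu_sum)
  qed
  also have "\<dots> = (\<Sum>j\<in>{e..<d}. w j (e + (d - Suc j)))"
    using assms by (subst sum.If_cases) (auto intro!: sum.cong)
  finally show ?thesis .
qed

lemma telesc: fixes x y u v :: real assumes "e \<le> d" "d \<le> Suc n"
  shows "(x*v - y*u) * (\<Sum>j\<in>{e..<d}. x^j*y^(n-j)*u^(e+(d-Suc j))*v^(n-(e+(d-Suc j))))
     = x^d*y^(Suc n-d)*u^e*v^(Suc n-e) - x^e*y^(Suc n-e)*u^d*v^(Suc n-d)"
proof -
  define g where "g j = x^j*y^(Suc n-j)*u^(d+e-j)*v^(Suc n+j-d-e)" for j
  have "(x*v - y*u) * (\<Sum>j\<in>{e..<d}. x^j*y^(n-j)*u^(e+(d-Suc j))*v^(n-(e+(d-Suc j))))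
      = (\<Sum>j\<in>{e..<d}. g (Suc j) - g j)"
    unfolding sum_distrib_left
  proof (rule sum.cong[OF refl])
    fix j assume j: "j \<in> {e..<d}"
    have e1: "Suc n - j = Suc (n-j)" "d + e - j = Suc (e + (d - Suc j))"
      "Suc n + Suc j - d - e = Suc (n - (e + (d-Suc j)))" "Suc n + j - d - e = n - (e + (d-Suc j))"
      "d + e - Suc j = e + (d - Suc j)" "Suc n - Suc j = n - j"
      using j assms by auto
    show "(x*v - y*u) * (x^j*y^(n-j)*u^(e+(d-Suc j))*v^(n-(e+(d-Suc j)))) = g (Suc j) - g j"
      unfolding g_def e1 by (simp add: algebra_simps)
  qed
  also have "\<dots> = g d - g e" by (rule sum_Suc_diff'[OF assms(1)])
  also have "\<dots> = x^d*y^(Suc n-d)*u^e*v^(Suc n-e) - x^e*y^(Suc n-e)*u^d*v^(Suc n-d)"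
    using assms unfolding g_def by (simp add: add.commute)
  finally show ?thesis .
qed

definition Bz :: "nat \<Rightarrow> (nat \<Rightarrow> real) \<Rightarrow> (nat \<Rightarrow> real) \<Rightarrow> nat \<Rightarrow> nat \<Rightarrow> real" where
  "Bz n a b j k = (\<Sum>m\<le>n. a (j+m+1) * (if m \<le> k then b (k-m) else 0)
                      - b (j+m+1) * (if m \<le> k then a (k-m) else 0))"

lemma delta_sum: fixes a :: "nat \<Rightarrow> real" assumes "\<forall>m>N. a m = 0"
  shows "(\<Sum>d\<le>N. a d * (if P \<and> d = p then 1 else 0)) = (if P then a p else 0)"
proof -
  have "(\<Sum>d\<le>N. a d * (if P \<and> d = p then 1 else 0)) = (\<Sum>d\<le>N. if d = p then (if P then a d else 0) else 0)"
    by (intro sum.cong) simp_all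
  also have "\<dots> = (if P then a p else 0)" using assms by (auto simp: sum.delta)
  finally show ?thesis .
qed

lemma I1: fixes a b :: "nat \<Rightarrow> real" assumes "\<forall>m>Suc n. a m = 0" "\<forall>m>Suc n. b m = 0"
  shows "(\<Sum>d\<le>Suc n. \<Sum>e\<le>Suc n. a d * b e * (if j+m+1 = d \<and> m \<le> k \<and> k - m = e then 1 else 0))
     = a (j+m+1) * (if m \<le> k then b (k-m) else 0)"
proof -
  have "(\<Sum>d\<le>Suc n. \<Sum>e\<le>Suc n. a d * b e * (if j+m+1 = d \<and> m \<le> k \<and> k - m = e then 1 else 0))
    = (\<Sum>d\<le>Suc n. \<Sum>e\<le>Suc n. a d * (if True \<and> d = j+m+1 then 1 else 0) * (b e * (if m \<le> k \<and> e = k - m then 1 else 0)))"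
    by (intro sum.cong refl) auto
  also have "\<dots> = (\<Sum>d\<le>Suc n. a d * (if True \<and> d = j+m+1 then 1 else 0) * (\<Sum>e\<le>Suc n. b e * (if m \<le> k \<and> e = k - m then 1 else 0)))"
    by (simp only: sum_distrib_left)
  also have "\<dots> = a (j+m+1) * (if m \<le> k then b (k-m) else 0)"
    by (simp only: delta_sum[OF assms(2)] sum_distrib_right[symmetric] delta_sum[OF assms(1)]) simp
  finally show ?thesis .
qed

lemma swap3: fixes h :: "_ \<Rightarrow> _ \<Rightarrow> _ \<Rightarrow> real" shows "(\<Sum>d\<in>A. \<Sum>e\<in>B. \<Sum>m\<in>C. h d e m) = (\<Sum>m\<in>C. \<Sum>d\<in>A. \<Sum>e\<in>B. h d e m)"
proof -
  have "(\<Sum>d\<in>A. \<Sum>e\<in>B. \<Sum>m\<in>C. h d e m) = (\<Sum>d\<in>A. \<Sum>m\<in>C. \<Sum>e\<in>B. h d e m)"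
    by (rule sum.cong[OF refl], rule sum.swap)
  also have "\<dots> = (\<Sum>m\<in>C. \<Sum>d\<in>A. \<Sum>e\<in>B. h d e m)" by (rule sum.swap)
  finally show ?thesis .
qed

lemma Bz_expand: assumes a: "\<forall>m>Suc n. a m = 0" and b: "\<forall>m>Suc n. b m = 0"
  shows "Bz n a b j k = (\<Sum>d\<le>Suc n. \<Sum>e\<le>Suc n. a d * b e * (Bu n d e j k - Bu n e d j k))"
proof -
  have P1: "(\<Sum>d\<le>Suc n. \<Sum>e\<le>Suc n. a d * b e * Bu n d e j k)
     = (\<Sum>m\<le>n. \<Sum>d\<le>Suc n. \<Sum>e\<le>Suc n. a d * b e * (if j+m+1 = d \<and> m \<le> k \<and> k - m = e then 1 else 0))"
    unfolding Bu_def sum_distrib_left by (rule swap3)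
  have "(\<Sum>d\<le>Suc n. \<Sum>e\<le>Suc n. a d * b e * Bu n e d j k)
     = (\<Sum>e\<le>Suc n. \<Sum>d\<le>Suc n. b e * a d * Bu n e d j k)"
    by (subst sum.swap) (simp add: mult.commute)
  also have "\<dots> = (\<Sum>m\<le>n. \<Sum>e\<le>Suc n. \<Sum>d\<le>Suc n. b e * a d * (if j+m+1 = e \<and> m \<le> k \<and> k - m = d then 1 else 0))"
    unfolding Bu_def sum_distrib_left by (rule swap3)
  finally have P2: "(\<Sum>d\<le>Suc n. \<Sum>e\<le>Suc n. a d * b e * Bu n e d j k) = \<dots>" .
  have "(\<Sum>d\<le>Suc n. \<Sum>e\<le>Suc n. a d * b e * (Bu n d e j k - Bu n e d j k))
     = (\<Sum>d\<le>Suc n. \<Sum>e\<le>Suc n. a d * b e * Bu n d e j k) - (\<Sum>d\<le>Suc n. \<Sum>e\<le>Suc n. a d * b e * Bu n e d j k)"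
    by (simp only: right_diff_distrib sum_subtractf)
  also have "\<dots> = Bz n a b j k" unfolding P1 P2 I1[OF a b] I1[OF b a] Bz_def sum_subtractf ..
  finally show ?thesis by simp
qed

definition Ah :: "nat \<Rightarrow> (nat \<Rightarrow> real) \<Rightarrow> real \<Rightarrow> real \<Rightarrow> real" where
  "Ah N a x y = (\<Sum>m\<le>N. a m * x^m * y^(N-m))"

lemma unitG: fixes x y u v :: real assumes "d \<le> Suc n" "e \<le> Suc n"
  shows "(x*v - y*u) * (\<Sum>j\<le>n. \<Sum>k\<le>n. (Bu n d e j k - Bu n e d j k) * (x^j*y^(n-j)*u^k*v^(n-k)))
     = x^d*y^(Suc n-d)*u^e*v^(Suc n-e) - x^e*y^(Suc n-e)*u^d*v^(Suc n-d)"
proof (cases "e \<le> d")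
  case True
  show ?thesis unfolding unit_sum[OF True assms(1)] using telesc[OF True assms(1)] by simp
next
  case False
  hence ed: "d \<le> e" by simp
  have "(\<Sum>j\<le>n. \<Sum>k\<le>n. (Bu n d e j k - Bu n e d j k) * (x^j*y^(n-j)*u^k*v^(n-k)))
     = - (\<Sum>j\<le>n. \<Sum>k\<le>n. (Bu n e d j k - Bu n d e j k) * (x^j*y^(n-j)*u^k*v^(n-k)))"
    by (simp add: sum_negf[symmetric] algebra_simps)
  note X = this
  have Y: "(x*v - y*u) * (\<Sum>j\<le>n. \<Sum>k\<le>n. (Bu n e d j k - Bu n d e j k) * (x^j*y^(n-j)*u^k*v^(n-k)))
     = x^e*y^(Suc n-e)*u^d*v^(Suc n-d) - x^d*y^(Suc n-d)*u^e*v^(Suc n-e)"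
    unfolding unit_sum[OF ed assms(2)] by (rule telesc[OF ed assms(2)])
  show ?thesis unfolding X using Y by (simp only: mult_minus_right)
qed

lemma swap4: fixes h :: "_ \<Rightarrow> _ \<Rightarrow> _ \<Rightarrow> _ \<Rightarrow> real"
  shows "(\<Sum>j\<in>A. \<Sum>k\<in>B. \<Sum>d\<in>C. \<Sum>e\<in>D. h j k d e) = (\<Sum>d\<in>C. \<Sum>e\<in>D. \<Sum>j\<in>A. \<Sum>k\<in>B. h j k d e)"
proof -
  have "(\<Sum>j\<in>A. \<Sum>k\<in>B. \<Sum>d\<in>C. \<Sum>e\<in>D. h j k d e) = (\<Sum>j\<in>A. \<Sum>d\<in>C. \<Sum>e\<in>D. \<Sum>k\<in>B. h j k d e)"
    by (rule sum.cong[OF refl], rule swap3[symmetric])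
  also have "\<dots> = (\<Sum>d\<in>C. \<Sum>j\<in>A. \<Sum>e\<in>D. \<Sum>k\<in>B. h j k d e)"
    by (rule sum.swap[of "\<lambda>j d. \<Sum>e\<in>D. \<Sum>k\<in>B. h j k d e" C A])
  also have "\<dots> = (\<Sum>d\<in>C. \<Sum>e\<in>D. \<Sum>j\<in>A. \<Sum>k\<in>B. h j k d e)"
  proof -
    have sw: "(\<Sum>j\<in>A. \<Sum>e\<in>D. \<Sum>k\<in>B. h j k d e) = (\<Sum>e\<in>D. \<Sum>j\<in>A. \<Sum>k\<in>B. h j k d e)" for d
      by (rule sum.swap[of "\<lambda>j e. \<Sum>k\<in>B. h j k d e" D A])
    show ?thesis by (simp only: sw)
  qed
  finally show ?thesis .
qed

lemma bez: fixes x y u v :: real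
  assumes a: "\<forall>m>Suc n. a m = 0" and b: "\<forall>m>Suc n. b m = 0"
  shows "(x*v - y*u) * (\<Sum>j\<le>n. \<Sum>k\<le>n. Bz n a b j k * (x^j*y^(n-j)*u^k*v^(n-k)))
     = Ah (Suc n) a x y * Ah (Suc n) b u v - Ah (Suc n) a u v * Ah (Suc n) b x y"
proof -
  define G where "G d e = x^d*y^(Suc n-d)*u^e*v^(Suc n-e) - x^e*y^(Suc n-e)*u^d*v^(Suc n-d)" for d e
  have "(\<Sum>j\<le>n. \<Sum>k\<le>n. Bz n a b j k * (x^j*y^(n-j)*u^k*v^(n-k)))
     = (\<Sum>j\<le>n. \<Sum>k\<le>n. \<Sum>d\<le>Suc n. \<Sum>e\<le>Suc n. a d * b e * ((Bu n d e j k - Bu n e d j k) * (x^j*y^(n-j)*u^k*v^(n-k))))"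
    unfolding Bz_expand[OF a b] sum_distrib_right by (simp add: mult.assoc)
  also have "\<dots> = (\<Sum>d\<le>Suc n. \<Sum>e\<le>Suc n. a d * b e * (\<Sum>j\<le>n. \<Sum>k\<le>n. (Bu n d e j k - Bu n e d j k) * (x^j*y^(n-j)*u^k*v^(n-k))))"
    unfolding sum_distrib_left by (rule swap4)
  finally have S: "(x*v - y*u) * (\<Sum>j\<le>n. \<Sum>k\<le>n. Bz n a b j k * (x^j*y^(n-j)*u^k*v^(n-k)))
     = (x*v - y*u) * (\<Sum>d\<le>Suc n. \<Sum>e\<le>Suc n. a d * b e * (\<Sum>j\<le>n. \<Sum>k\<le>n. (Bu n d e j k - Bu n e d j k) * (x^j*y^(n-j)*u^k*v^(n-k))))"
    by (rule arg_cong[where f="\<lambda>z. (x*v - y*u) * z"])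
  also have "\<dots> = (\<Sum>d\<le>Suc n. \<Sum>e\<le>Suc n. a d * b e * ((x*v - y*u) * (\<Sum>j\<le>n. \<Sum>k\<le>n. (Bu n d e j k - Bu n e d j k) * (x^j*y^(n-j)*u^k*v^(n-k)))))"
    by (simp only: sum_distrib_left mult.left_commute)
  also have "\<dots> = (\<Sum>d\<le>Suc n. \<Sum>e\<le>Suc n. a d * b e * G d e)"
    by (intro sum.cong refl, subst unitG) (auto simp: G_def)
  also have "\<dots> = (\<Sum>d\<le>Suc n. \<Sum>e\<le>Suc n. a d * b e * (x^d*y^(Suc n-d)*u^e*v^(Suc n-e)))
       - (\<Sum>d\<le>Suc n. \<Sum>e\<le>Suc n. a d * b e * (x^e*y^(Suc n-e)*u^d*v^(Suc n-d)))"
    unfolding G_def right_diff_distrib sum_subtractf ..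
  also have "(\<Sum>d\<le>Suc n. \<Sum>e\<le>Suc n. a d * b e * (x^d*y^(Suc n-d)*u^e*v^(Suc n-e))) = Ah (Suc n) a x y * Ah (Suc n) b u v"
    unfolding Ah_def sum_product by (intro sum.cong refl) (simp add: mult_ac)
  also have "(\<Sum>d\<le>Suc n. \<Sum>e\<le>Suc n. a d * b e * (x^e*y^(Suc n-e)*u^d*v^(Suc n-d))) = Ah (Suc n) a u v * Ah (Suc n) b x y"
    unfolding Ah_def sum_product by (intro sum.cong refl) (simp add: mult_ac)
  finally show ?thesis .
qed


lemma stir_deg: "degree (\<Prod>i<N. [:- of_nat i, 1::real:]) = N"
  by (subst degree_prod_eq_sum_degree) auto

lemma stir_zero: "N < k \<Longrightarrow> stirling1s N k = 0"
  unfolding stirling1s_def by (rule coeff_eq_0) (simp add: stir_deg)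

lemma stir_poly: "(\<Sum>k\<le>N. stirling1s N k * z^k) = (\<Prod>i<N. z - real i)"
proof -
  have "(\<Prod>i<N. z - real i) = poly (\<Prod>i<N. [:- of_nat i, 1::real:]) z"
    by (simp add: poly_prod)
  also have "\<dots> = (\<Sum>k\<le>N. stirling1s N k * z^k)"
    unfolding poly_altdef stir_deg stirling1s_def ..
  finally show ?thesis by simp
qed

definition aS :: "nat \<Rightarrow> nat \<Rightarrow> real" where
  "aS n m = (if m \<le> Suc n then (\<Sum>k\<le>m. real (Suc n - k choose (m - k)) * stirling1s (Suc n) k / real n ^ (Suc n - k)) else 0)"

lemma inner_binom: fixes z w c :: real assumes "k \<le> N"
  shows "(\<Sum>m\<le>N. if k \<le> m then real (N - k choose (m - k)) * c * z^m * w^(N-m) else 0) = c * z^k * (z+w)^(N-k)"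
proof -
  have "(\<Sum>m\<le>N. if k \<le> m then real (N - k choose (m - k)) * c * z^m * w^(N-m) else 0)
     = (\<Sum>m\<in>{m\<in>{..N}. k \<le> m}. real (N - k choose (m - k)) * c * z^m * w^(N-m))"
    by (simp only: sum.inter_filter[OF finite_atMost])
  also have "{m\<in>{..N}. k \<le> m} = {0+k..(N-k)+k}" using assms by auto
  also have "(\<Sum>m\<in>{0+k..(N-k)+k}. real (N - k choose (m - k)) * c * z^m * w^(N-m))
     = (\<Sum>i=0..N-k. real (N - k choose i) * c * z^(i+k) * w^(N-k-i))"
    unfolding sum.shift_bounds_cl_nat_ivl by (intro sum.cong refl) (simp add: diff_diff_add add.commute)
  also have "\<dots> = c * z^k * (\<Sum>i\<le>N-k. real (N - k choose i) * z^i * w^(N-k-i))"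
    by (simp add: sum_distrib_left atLeast0AtMost power_add mult_ac)
  also have "\<dots> = c * z^k * (z+w)^(N-k)" by (simp add: binomial_ring)
  finally show ?thesis .
qed

lemma Ah_aS: fixes z :: real assumes "n \<ge> 1"
  shows "(\<Sum>m\<le>Suc n. aS n m * z^m * (real n - z)^(Suc n - m)) = (\<Prod>i<Suc n. z - real i)"
proof -
  define w where "w = real n - z"
  define N where "N = Suc n"
  have "(\<Sum>m\<le>N. aS n m * z^m * w^(N - m))
     = (\<Sum>m\<le>N. \<Sum>k\<le>N. if k \<le> m then real (N - k choose (m - k)) * (stirling1s N k / real n ^ (N - k)) * z^m * w^(N-m) else 0)"
  proof (intro sum.cong refl)
    fix m assume m: "m \<in> {..N}"
    have e: "{..m} = {k\<in>{..N}. k \<le> m}" using m by auto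
    have "aS n m * z^m * w^(N - m) = (\<Sum>k\<le>m. real (N - k choose (m - k)) * (stirling1s N k / real n ^ (N - k)) * z^m * w^(N-m))"
      using m unfolding aS_def N_def by (simp add: sum_distrib_right)
    also have "\<dots> = (\<Sum>k\<le>N. if k \<le> m then real (N - k choose (m - k)) * (stirling1s N k / real n ^ (N - k)) * z^m * w^(N-m) else 0)"
      unfolding e by (simp only: sum.inter_filter[OF finite_atMost])
    finally show "aS n m * z^m * w^(N - m) = (\<Sum>k\<le>N. if k \<le> m then real (N - k choose (m - k)) * (stirling1s N k / real n ^ (N - k)) * z^m * w^(N-m) else 0)" .
  qed
  also have "\<dots> = (\<Sum>k\<le>N. \<Sum>m\<le>N. if k \<le> m then real (N - k choose (m - k)) * (stirling1s N k / real n ^ (N - k)) * z^m * w^(N-m) else 0)"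
    by (rule sum.swap)
  also have "\<dots> = (\<Sum>k\<le>N. (stirling1s N k / real n ^ (N - k)) * z^k * (z+w)^(N-k))"
    by (intro sum.cong refl inner_binom) auto
  also have "\<dots> = (\<Sum>k\<le>N. stirling1s N k * z^k)"
    using assms unfolding w_def by (intro sum.cong refl) auto
  also have "\<dots> = (\<Prod>i<N. z - real i)" by (rule stir_poly)
  finally show ?thesis unfolding w_def N_def .
qed


lemma sum_int_nat: "(\<Sum>k\<in>{0..int p}. f k) = (\<Sum>k\<le>p. f (int k))"
proof -
  have "{0..int p} = int ` {0..p}" by (simp add: image_int_atLeastAtMost)
  then show ?thesis by (simp add: sum.reindex atMost_atLeast0)
qed

lemma Ht_entry: assumes "j \<le> n" "m \<le> n"
  shows "Htmat n $$ (j,m) = aS n (j+m+1)"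
proof -
  have "Htmat n $$ (j,m) = (\<Sum>k\<in>{0..int (j+m+1)}. ibinom (int n - k + 1) (int n - int j - int m)
        * stirling1s (n+1) (nat k) / (real n powi (int n - k + 1)))"
    using assms unfolding Htmat_def by (simp add: algebra_simps)
  also have "\<dots> = (\<Sum>k\<le>j+m+1. ibinom (int n - int k + 1) (int n - int j - int m)
        * stirling1s (n+1) k / (real n powi (int n - int k + 1)))"
    by (subst sum_int_nat) simp
  also have "\<dots> = aS n (j+m+1)"
  proof (cases "j+m+1 \<le> Suc n")
    case True
    have "aS n (j+m+1) = (\<Sum>k\<le>j+m+1. real (Suc n - k choose (j+m+1 - k)) * stirling1s (Suc n) k / real n ^ (Suc n - k))"
      using True by (simp add: aS_def)
    moreover have "(\<Sum>k\<le>j+m+1. ibinom (int n - int k + 1) (int n - int j - int m)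
        * stirling1s (n+1) k / (real n powi (int n - int k + 1))) = (\<Sum>k\<le>j+m+1. real (Suc n - k choose (j+m+1 - k)) * stirling1s (Suc n) k / real n ^ (Suc n - k))"
    proof (rule sum.cong[OF refl])
      fix k assume k: "k \<in> {..j+m+1}"
      have p: "real n powi (int n - int k + 1) = real n ^ (Suc n - k)"
      proof -
        have "int n - int k + 1 = int (Suc n - k)" using k True by auto
        then show ?thesis by (simp only: power_int_of_nat)
      qed
      have c: "Suc n - k choose (Suc n - Suc (j+m)) = Suc n - k choose (j+m+1 - k)"
        using k True by (subst binomial_symmetric) (auto simp: diff_diff_add)
      have n1: "nat (1 + int n - int k) = Suc n - k" "nat (int n - (int j + int m)) = Suc n - Suc (j+m)"
        "nat (int n - int k + 1) = Suc n - k" "nat (int n - int j - int m) = Suc n - Suc (j+m)"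
        using k True by auto
      show "ibinom (int n - int k + 1) (int n - int j - int m) * stirling1s (n+1) k / real n powi (int n - int k + 1) =
         real (Suc n - k choose (j+m+1 - k)) * stirling1s (Suc n) k / real n ^ (Suc n - k)"
        unfolding p ibinom_def using k True n1 c by auto
    qed
    ultimately show ?thesis by simp
  next
    case False
    then show ?thesis unfolding aS_def ibinom_def by auto
  qed
  finally show ?thesis .
qed

lemma Tt_entry: assumes "m \<le> n" "k \<le> n"
  shows "Ttmat n $$ (m,k) = (if m \<le> k then aS n (k-m) else 0)"
proof (cases "m \<le> k")
  case False
  then show ?thesis using assms unfolding Ttmat_def by simp
next
  case True
  have "Ttmat n $$ (m,k) = (\<Sum>q\<in>{0..int (k-m)}. ibinom (int n - q + 1) (int k - int m - q)
        * stirling1s (n+1) (nat q) / (real n powi (int n - q + 1)))"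
    using assms True unfolding Ttmat_def by (simp add: of_nat_diff)
  also have "\<dots> = (\<Sum>q\<le>k-m. ibinom (int n - int q + 1) (int k - int m - int q)
        * stirling1s (n+1) q / (real n powi (int n - int q + 1)))"
    by (subst sum_int_nat) simp
  also have "\<dots> = aS n (k-m)"
  proof -
    have "aS n (k-m) = (\<Sum>q\<le>k-m. real (Suc n - q choose (k - m - q)) * stirling1s (Suc n) q / real n ^ (Suc n - q))"
      using True assms by (simp add: aS_def)
    moreover have "(\<Sum>q\<le>k-m. ibinom (int n - int q + 1) (int k - int m - int q)
        * stirling1s (n+1) q / (real n powi (int n - int q + 1))) = (\<Sum>q\<le>k-m. real (Suc n - q choose (k - m - q)) * stirling1s (Suc n) q / real n ^ (Suc n - q))"
    proof (rule sum.cong[OF refl])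
      fix q assume q: "q \<in> {..k-m}"
      have p: "real n powi (int n - int q + 1) = real n ^ (Suc n - q)"
      proof -
        have "int n - int q + 1 = int (Suc n - q)" using q True assms by auto
        then show ?thesis by (simp only: power_int_of_nat)
      qed
      have n1: "nat (1 + int n - int q) = Suc n - q" "nat (int k - (int m + int q)) = k - (m + q)"
        "nat (int n - int q + 1) = Suc n - q" "nat (int k - int m - int q) = k - (m + q)"
        using q True assms by auto
      show "ibinom (int n - int q + 1) (int k - int m - int q) * stirling1s (n+1) q / real n powi (int n - int q + 1) =
           real (Suc n - q choose (k - m - q)) * stirling1s (Suc n) q / real n ^ (Suc n - q)"
        unfolding p ibinom_def using q True assms n1 by auto
    qed
    ultimately show ?thesis by simp
  qed
  finally show ?thesis using True by simp
qed

lemma H_entry: assumes "j \<le> n" "m \<le> n"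
  shows "Hmat n $$ (j,m) = real (Suc n choose (j+m+1))"
  using assms unfolding Hmat_def ibinom_def by (auto simp: nat_add_distrib binomial_eq_0 simp del: binomial_Suc_Suc)

lemma T_entry: assumes "m \<le> n" "k \<le> n"
  shows "Tmat n $$ (m,k) = (if m \<le> k then real (Suc n choose (k-m)) else 0)"
proof -
  have "nat (int n + 1) = Suc n" by auto
  then show ?thesis using assms unfolding Tmat_def ibinom_def by (auto simp: nat_diff_distrib)
qed


definition bB :: "nat \<Rightarrow> nat \<Rightarrow> real" where "bB n m = real (Suc n choose m)"

lemma dims[simp]:
  "dim_row (Htmat n) = Suc n" "dim_col (Htmat n) = Suc n"
  "dim_row (Hmat n) = Suc n" "dim_col (Hmat n) = Suc n"
  "dim_row (Tmat n) = Suc n" "dim_col (Tmat n) = Suc n"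
  "dim_row (Ttmat n) = Suc n" "dim_col (Ttmat n) = Suc n"
  "dim_row (Vmat n) = Suc n" "dim_col (Vmat n) = Suc n"
  "dim_row (Vtmat n) = Suc n" "dim_col (Vtmat n) = Suc n"
  by (simp_all add: Htmat_def Hmat_def Tmat_def Ttmat_def Vmat_def Vtmat_def)

lemma X_entry: assumes "j \<le> n" "k \<le> n"
  shows "(Htmat n * Tmat n - Hmat n * Ttmat n) $$ (j,k) = Bz n (aS n) (bB n) j k"
proof -
  have "(Htmat n * Tmat n - Hmat n * Ttmat n) $$ (j,k)
     = (\<Sum>m\<in>{0..<Suc n}. Htmat n $$ (j,m) * Tmat n $$ (m,k)) - (\<Sum>m\<in>{0..<Suc n}. Hmat n $$ (j,m) * Ttmat n $$ (m,k))"
    using assms by (simp add: scalar_prod_def)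
  also have "\<dots> = (\<Sum>m\<le>n. aS n (j+m+1) * (if m \<le> k then bB n (k-m) else 0))
     - (\<Sum>m\<le>n. bB n (j+m+1) * (if m \<le> k then aS n (k-m) else 0))"
  proof -
    have e1: "(\<Sum>m\<in>{0..<Suc n}. Htmat n $$ (j,m) * Tmat n $$ (m,k)) = (\<Sum>m\<le>n. aS n (j+m+1) * (if m \<le> k then bB n (k-m) else 0))"
      unfolding atLeast0LessThan lessThan_Suc_atMost
      by (rule sum.cong[OF refl]) (use assms in \<open>auto simp: Ht_entry T_entry bB_def\<close>)
    have e2: "(\<Sum>m\<in>{0..<Suc n}. Hmat n $$ (j,m) * Ttmat n $$ (m,k)) = (\<Sum>m\<le>n. bB n (j+m+1) * (if m \<le> k then aS n (k-m) else 0))"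
      unfolding atLeast0LessThan lessThan_Suc_atMost
      by (rule sum.cong[OF refl]) (use assms in \<open>auto simp: H_entry Tt_entry bB_def\<close>)
    show ?thesis unfolding e1 e2 ..
  qed
  also have "\<dots> = Bz n (aS n) (bB n) j k" unfolding Bz_def sum_subtractf ..
  finally show ?thesis .
qed

lemma cont_eq: fixes f g :: "real \<Rightarrow> real"
  assumes "isCont f a" "isCont g a" "\<And>z. z \<noteq> a \<Longrightarrow> f z = g z" shows "f a = g a"
proof -
  have "eventually (\<lambda>z. f z = g z) (at a)" using assms(3) by (auto simp: eventually_at_filter)
  then have "eventually (\<lambda>z. f z = g z) (nhds a)" by (rule at_within_isCont_imp_nhds[OF _ assms(1,2)])
  then show ?thesis by (rule eventually_nhds_x_imp_x)
qed

lemma key: assumes n: "n \<ge> 1" and g: "g \<le> n"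
  shows "(\<Sum>j\<le>n. \<Sum>k\<le>n. (Htmat n * Tmat n - Hmat n * Ttmat n) $$ (j,k) *
           (z^j*(real n - z)^(n-j)*real g^k*(real n - real g)^(n-k)))
       = real n ^ n * (\<Prod>i\<in>{..<Suc n} - {g}. z - real i)"
proof -
  define S where "S z = (\<Sum>j\<le>n. \<Sum>k\<le>n. Bz n (aS n) (bB n) j k *
           (z^j*(real n - z)^(n-j)*real g^k*(real n - real g)^(n-k)))" for z
  have Seq: "(\<Sum>j\<le>n. \<Sum>k\<le>n. (Htmat n * Tmat n - Hmat n * Ttmat n) $$ (j,k) *
           (z^j*(real n - z)^(n-j)*real g^k*(real n - real g)^(n-k))) = S z" for z
    unfolding S_def by (intro sum.cong refl, subst X_entry) auto
  have sa: "\<forall>m>Suc n. aS n m = 0" by (simp add: aS_def)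
  have sb: "\<forall>m>Suc n. bB n m = 0" by (simp add: bB_def)
  have Ab: "Ah (Suc n) (bB n) x (real n - x) = real n ^ Suc n" for x
    unfolding Ah_def bB_def using binomial_ring[of x "real n - x" "Suc n"] by simp
  have Aa: "Ah (Suc n) (aS n) x (real n - x) = (\<Prod>i<Suc n. x - real i)" for x
    unfolding Ah_def using Ah_aS[OF n] by simp
  have Pr: "(\<Prod>i<Suc n. x - real i) = (x - real g) * (\<Prod>i\<in>{..<Suc n} - {g}. x - real i)" for x
    using g by (subst prod.remove[of _ g]) auto
  have Pg: "(\<Prod>i<Suc n. real g - real i) = 0" using Pr[of "real g"] by simp
  have main: "real n * (z - real g) * S z = real n ^ Suc n * (\<Prod>i<Suc n. z - real i)" for z
  proof -
    have "(z*(real n - real g) - (real n - z)*real g) * S z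
      = Ah (Suc n) (aS n) z (real n - z) * Ah (Suc n) (bB n) (real g) (real n - real g)
        - Ah (Suc n) (aS n) (real g) (real n - real g) * Ah (Suc n) (bB n) z (real n - z)"
      unfolding S_def using bez[OF sa sb, of z "real n - real g" "real n - z" "real g"]
      by (simp add: mult_ac)
    also have "\<dots> = real n ^ Suc n * (\<Prod>i<Suc n. z - real i)"
      unfolding Aa Ab Pg by simp
    finally show ?thesis by (simp add: algebra_simps)
  qed
  have off: "S z = real n ^ n * (\<Prod>i\<in>{..<Suc n} - {g}. z - real i)" if "z \<noteq> real g" for z
  proof -
    have "real n * (z - real g) * S z = real n * (z - real g) * (real n ^ n * (\<Prod>i\<in>{..<Suc n} - {g}. z - real i))"
      unfolding main Pr by (simp add: mult_ac)
    moreover have "real n * (z - real g) \<noteq> 0" using n that by simp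
    ultimately show ?thesis by simp
  qed
  have "S z = real n ^ n * (\<Prod>i\<in>{..<Suc n} - {g}. z - real i)"
  proof (cases "z = real g")
    case True
    have "S (real g) = real n ^ n * (\<Prod>i\<in>{..<Suc n} - {g}. real g - real i)"
    proof (rule cont_eq[where f=S and g="\<lambda>z. real n ^ n * (\<Prod>i\<in>{..<Suc n} - {g}. z - real i)"])
      show "isCont S (real g)" unfolding S_def by (intro continuous_intros)
      show "isCont (\<lambda>z. real n ^ n * (\<Prod>i\<in>{..<Suc n} - {g}. z - real i)) (real g)"
        by (intro continuous_intros)
      show "\<And>z. z \<noteq> real g \<Longrightarrow> S z = real n ^ n * (\<Prod>i\<in>{..<Suc n} - {g}. z - real i)"
        by (rule off)
    qed
    then show ?thesis using True by simp
  qed (rule off)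
  then show ?thesis unfolding Seq .
qed


lemma dg: assumes "g \<le> n"
  shows "(\<Prod>i\<in>{..<Suc n} - {g}. real g - real i) = (-1)^(n-g) * fact g * fact (n-g)"
  using assms
proof (induction n rule: nat_induct_at_least)
  case base
  have "{..<Suc g} - {g} = {0..<g}" by auto
  moreover have "(\<Prod>i\<in>{0..<g}. real g - real i) = fact g"
    unfolding fact_prod_rev of_nat_prod by (intro prod.cong refl) (auto simp: of_nat_diff)
  ultimately show ?case by simp
next
  case (Suc n)
  have "{..<Suc (Suc n)} - {g} = insert (Suc n) ({..<Suc n} - {g})" using Suc by auto
  then have "(\<Prod>i\<in>{..<Suc (Suc n)} - {g}. real g - real i)
      = (real g - real (Suc n)) * (\<Prod>i\<in>{..<Suc n} - {g}. real g - real i)" by simp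
  also have "\<dots> = (real g - real (Suc n)) * ((-1)^(n-g) * fact g * fact (n-g))" using Suc by simp
  also have "Suc n - g = Suc (n - g)" using Suc by auto
  moreover have "real g - real (Suc n) = - real (Suc (n - g))" using Suc by (auto simp: of_nat_diff)
  ultimately show ?case by (simp add: algebra_simps)
qed

lemma bern_eq: fixes a :: nat assumes "n \<ge> 1" "a \<le> n" "j \<le> n"
  shows "bernstein n j (real a / real n) = real (n choose j) * (real a ^ j * (real n - real a) ^ (n-j)) / real n ^ n"
proof -
  have "1 - real a / real n = (real n - real a) / real n" using assms by (simp add: field_simps)
  moreover have "real n ^ n = real n ^ j * real n ^ (n-j)"
    using assms by (simp add: power_add[symmetric])
  ultimately show ?thesis unfolding bernstein_def using assms by (simp add: power_divide)
qed

abbreviation "Xm n \<equiv> Htmat n * Tmat n - Hmat n * Ttmat n"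
abbreviation "dv n g \<equiv> 1 / ((-1) ^ (n - g) * fact g * fact (n - g) :: real)"

lemma X_carrier: "Xm n \<in> carrier_mat (n+1) (n+1)" by auto

lemma W_entry: assumes "j \<le> n" "g \<le> n"
  shows "(Deltainv n * Xm n * transpose_mat (Vtmat n) * Dinv n) $$ (j,g)
     = 1 / real (n choose j) * (\<Sum>k\<le>n. Xm n $$ (j,k) * (real g ^ k * (real n - real g) ^ (n-k))) * dv n g"
proof -
  have A: "Deltainv n * Xm n = mat (n+1) (n+1) (\<lambda>(i,j). 1 / real (n choose i) * Xm n $$ (i,j))"
    unfolding Deltainv_def by (rule mat_diag_mult_left[OF X_carrier])
  have B: "Deltainv n * Xm n * transpose_mat (Vtmat n) \<in> carrier_mat (n+1) (n+1)"
    unfolding A by auto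
  have "(Deltainv n * Xm n * transpose_mat (Vtmat n) * Dinv n) $$ (j,g)
     = (Deltainv n * Xm n * transpose_mat (Vtmat n)) $$ (j,g) * dv n g"
    unfolding Dinv_def mat_diag_mult_right[OF B] using assms by simp
  also have "(Deltainv n * Xm n * transpose_mat (Vtmat n)) $$ (j,g)
     = (\<Sum>k\<in>{0..<Suc n}. 1 / real (n choose j) * Xm n $$ (j,k) * (real g ^ k * real (n - g) ^ (n-k)))"
    unfolding A using assms by (simp add: scalar_prod_def Vtmat_def)
  also have "\<dots> = 1 / real (n choose j) * (\<Sum>k\<le>n. Xm n $$ (j,k) * (real g ^ k * (real n - real g) ^ (n-k)))"
    unfolding atLeast0LessThan lessThan_Suc_atMost sum_distrib_left using assms
    by (intro sum.cong refl) (auto simp: of_nat_diff)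
  finally show ?thesis .
qed

lemma alg: fixes C A dv N :: real and h w :: "nat \<Rightarrow> real" assumes "C \<noteq> 0"
  shows "C*A/N * (1/C * (\<Sum>k\<le>n. h k * w k) * dv) = dv/N * (\<Sum>k\<le>n. h k * (A * w k))"
  using assms by (simp add: sum_distrib_left sum_distrib_right field_simps)

lemma diag_inv: assumes "\<And>i. i < N \<Longrightarrow> f i * g i = (1::real)"
  shows "mat_diag N f * mat_diag N g = 1\<^sub>m N"
  unfolding mat_diag_diag by (rule eq_matI) (auto simp: mat_diag_def assms)

lemma dims2[simp]:
  "dim_row (Dmat n) = Suc n" "dim_col (Dmat n) = Suc n"
  "dim_row (Dinv n) = Suc n" "dim_col (Dinv n) = Suc n"
  "dim_row (Deltamat n) = Suc n" "dim_col (Deltamat n) = Suc n"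
  "dim_row (Deltainv n) = Suc n" "dim_col (Deltainv n) = Suc n"
  by (simp_all add: Dmat_def Dinv_def Deltamat_def Deltainv_def mat_diag_def)

lemma W_carrier: "Deltainv n * Xm n * transpose_mat (Vtmat n) * Dinv n \<in> carrier_mat (Suc n) (Suc n)"
  unfolding carrier_mat_def by simp

lemma VW: assumes n: "n \<ge> 1"
  shows "Vmat n * (Deltainv n * Xm n * transpose_mat (Vtmat n) * Dinv n) = 1\<^sub>m (Suc n)"
proof (rule eq_matI)
  let ?W = "Deltainv n * Xm n * transpose_mat (Vtmat n) * Dinv n"
  show "dim_row (Vmat n * ?W) = dim_row (1\<^sub>m (Suc n))" by simp
  show "dim_col (Vmat n * ?W) = dim_col (1\<^sub>m (Suc n))" using W_carrier[of n] by simp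
  fix a g assume ag: "a < dim_row (1\<^sub>m (Suc n))" "g < dim_col (1\<^sub>m (Suc n))"
  then have a: "a \<le> n" and g: "g \<le> n" by auto
  have "(Vmat n * ?W) $$ (a,g) = (\<Sum>j\<in>{0..<Suc n}. Vmat n $$ (a,j) * ?W $$ (j,g))"
    using ag W_carrier[of n] by (simp add: scalar_prod_def)
  also have "\<dots> = (\<Sum>j\<le>n. dv n g / real n ^ n * (\<Sum>k\<le>n. Xm n $$ (j,k) *
           ((real a^j*(real n - real a)^(n-j))*(real g^k*(real n - real g)^(n-k)))))"
    unfolding atLeast0LessThan lessThan_Suc_atMost
  proof (rule sum.cong[OF refl])
    fix j assume j: "j \<in> {..n}"
    have c: "real (n choose j) \<noteq> 0" using j by simp
    have V: "Vmat n $$ (a,j) = real (n choose j) * (real a ^ j * (real n - real a) ^ (n-j)) / real n ^ n"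
      using a j n by (simp add: Vmat_def bern_eq)
    show "Vmat n $$ (a,j) * ?W $$ (j,g) = dv n g / real n ^ n * (\<Sum>k\<le>n. Xm n $$ (j,k) *
           ((real a^j*(real n - real a)^(n-j))*(real g^k*(real n - real g)^(n-k))))"
      unfolding W_entry[OF _ g, of j, OF j[unfolded atMost_iff]] V by (rule alg[OF c])
  qed
  also have "\<dots> = (\<Sum>j\<le>n. dv n g / real n ^ n * (\<Sum>k\<le>n. Xm n $$ (j,k) *
           (real a^j*(real n - real a)^(n-j)*real g^k*(real n - real g)^(n-k))))"
    by (simp only: mult.assoc)
  also have "\<dots> = dv n g / real n ^ n * (real n ^ n * (\<Prod>i\<in>{..<Suc n} - {g}. real a - real i))"
    unfolding sum_distrib_left[symmetric] key[OF n g] ..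
  also have "\<dots> = dv n g * (\<Prod>i\<in>{..<Suc n} - {g}. real a - real i)" using n by simp
  also have "\<dots> = 1\<^sub>m (Suc n) $$ (a,g)"
  proof (cases "a = g")
    case True
    then show ?thesis using g by (simp add: dg)
  next
    case False
    then have "a \<in> {..<Suc n} - {g}" using a by auto
    then have "(\<Prod>i\<in>{..<Suc n} - {g}. real a - real i) = 0"
      by (intro prod_zero) auto
    then show ?thesis using False a g by simp
  qed
  finally show "(Vmat n * ?W) $$ (a,g) = 1\<^sub>m (Suc n) $$ (a,g)" .
qed

theorem corollary2p8:
  fixes n :: nat
  assumes "n \<ge> 1"
  shows "inverts_mat (Dmat n) (Dinv n) \<and> inverts_mat (Dinv n) (Dmat n)
    \<and> inverts_mat (Deltamat n) (Deltainv n) \<and> inverts_mat (Deltainv n) (Deltamat n)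
    \<and> (let W = Deltainv n * (Htmat n * Tmat n - Hmat n * Ttmat n)
                * transpose_mat (Vtmat n) * Dinv n
       in inverts_mat (Vmat n) W \<and> inverts_mat W (Vmat n))"
proof -
  have f: "(-1) ^ (n - i) * fact i * fact (n - i) \<noteq> (0::real)" for i by simp
  have c: "real (n choose i) \<noteq> 0" if "i < n+1" for i using that by simp
  have 1: "inverts_mat (Dmat n) (Dinv n)" "inverts_mat (Dinv n) (Dmat n)"
  proof -
    have "Dmat n * Dinv n = 1\<^sub>m (n+1)"
      unfolding Dmat_def Dinv_def by (rule diag_inv) (use f in auto)
    moreover have "Dinv n * Dmat n = 1\<^sub>m (n+1)"
      unfolding Dmat_def Dinv_def by (rule diag_inv) (use f in auto)
    ultimately show "inverts_mat (Dmat n) (Dinv n)" "inverts_mat (Dinv n) (Dmat n)"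
      unfolding inverts_mat_def by simp_all
  qed
  have 2: "inverts_mat (Deltamat n) (Deltainv n)" "inverts_mat (Deltainv n) (Deltamat n)"
  proof -
    have "Deltamat n * Deltainv n = 1\<^sub>m (n+1)"
      unfolding Deltamat_def Deltainv_def by (rule diag_inv) (use c in auto)
    moreover have "Deltainv n * Deltamat n = 1\<^sub>m (n+1)"
      unfolding Deltamat_def Deltainv_def by (rule diag_inv) (use c in auto)
    ultimately show "inverts_mat (Deltamat n) (Deltainv n)" "inverts_mat (Deltainv n) (Deltamat n)"
      unfolding inverts_mat_def by simp_all
  qed
  have VW': "Vmat n * (Deltainv n * Xm n * transpose_mat (Vtmat n) * Dinv n) = 1\<^sub>m (Suc n)"
    by (rule VW[OF assms])
  have Vc: "Vmat n \<in> carrier_mat (Suc n) (Suc n)" by (rule carrier_matI) simp_all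
  have WV: "(Deltainv n * Xm n * transpose_mat (Vtmat n) * Dinv n) * Vmat n = 1\<^sub>m (Suc n)"
    by (rule mat_mult_left_right_inverse[OF Vc W_carrier VW'])
  have 3: "inverts_mat (Vmat n) (Deltainv n * Xm n * transpose_mat (Vtmat n) * Dinv n)"
    "inverts_mat (Deltainv n * Xm n * transpose_mat (Vtmat n) * Dinv n) (Vmat n)"
  proof -
    have r: "dim_row (Deltainv n * Xm n * transpose_mat (Vtmat n) * Dinv n) = Suc n"
      using W_carrier[of n] by (rule carrier_matD(1))
    show "inverts_mat (Vmat n) (Deltainv n * Xm n * transpose_mat (Vtmat n) * Dinv n)"
      unfolding inverts_mat_def dims(9) by (rule VW')
    show "inverts_mat (Deltainv n * Xm n * transpose_mat (Vtmat n) * Dinv n) (Vmat n)"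
      unfolding inverts_mat_def r by (rule WV)
  qed
  show ?thesis unfolding Let_def using 1 2 3 by blast
qed

end
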